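(* For coprime integers $n,m>1$, $$m_2\!\left(\mathbb{Z}_{nm}^2\right)\le\min\left\{n\cdot m_2\!\left(\mathbb{Z}_m^2\right),\ m\cdot m_2\!\left(\mathbb{Z}_n^2\right)\right\}.$$
   Context: $\mathbb{Z}_k=\mathbb{Z}/k\mathbb{Z}$. A line in $\mathbb{Z}_k^2$ is a translate of a cyclic subgroup of order $k$ of the additive group $\mathbb{Z}_k^2$; points are collinear if they lie on a common line. A cap in $\mathbb{Z}_k^2$ is a subset no three distinct points of which are collinear. $m_2(\mathbb{Z}_k^2)$ denotes the maximum cardinality of a cap in $\mathbb{Z}_k^2$. *)

theory Defs
  imports Main
begin

text \<open>Z_k^2 is represented by the residues {0..<k} \<times> {0..<k} (k > 0), with
  componentwise addition modulo k.\<close>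

definition Zk2 :: "nat \<Rightarrow> (nat \<times> nat) set" where
  "Zk2 k = {0..<k} \<times> {0..<k}"

definition zadd :: "nat \<Rightarrow> nat \<times> nat \<Rightarrow> nat \<times> nat \<Rightarrow> nat \<times> nat" where
  "zadd k p q = ((fst p + fst q) mod k, (snd p + snd q) mod k)"

definition cyc_subgroup :: "nat \<Rightarrow> nat \<times> nat \<Rightarrow> (nat \<times> nat) set" where
  "cyc_subgroup k g = {((t * fst g) mod k, (t * snd g) mod k) | t. True}"

definition is_line :: "nat \<Rightarrow> (nat \<times> nat) set \<Rightarrow> bool" where
  "is_line k L \<longleftrightarrow> (\<exists>p\<in>Zk2 k. \<exists>g\<in>Zk2 k.
      card (cyc_subgroup k g) = k \<and> L = zadd k p ` cyc_subgroup k g)"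

definition is_cap :: "nat \<Rightarrow> (nat \<times> nat) set \<Rightarrow> bool" where
  "is_cap k A \<longleftrightarrow> A \<subseteq> Zk2 k \<and>
     (\<forall>x\<in>A. \<forall>y\<in>A. \<forall>z\<in>A. x \<noteq> y \<and> y \<noteq> z \<and> x \<noteq> z \<longrightarrow>
        \<not> (\<exists>L. is_line k L \<and> x \<in> L \<and> y \<in> L \<and> z \<in> L))"

definition m2 :: "nat \<Rightarrow> nat" where
  "m2 k = Max (card ` {A. is_cap k A})"

end

theory Submission imports Defs "HOL-Number_Theory.Cong" begin

definition full :: "nat \<Rightarrow> nat \<times> nat \<Rightarrow> bool" where
  "full k g \<longleftrightarrow> (\<forall>t. k dvd t * fst g \<and> k dvd t * snd g \<longrightarrow> k dvd t)"

lemma cyc_eq: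
  assumes "k > 0"
  shows "cyc_subgroup k g = (\<lambda>t. ((t * fst g) mod k, (t * snd g) mod k)) ` {0..<k}"
proof
  show "cyc_subgroup k g \<subseteq> (\<lambda>t. ((t * fst g) mod k, (t * snd g) mod k)) ` {0..<k}"
  proof
    fix x assume "x \<in> cyc_subgroup k g"
    then obtain t where x: "x = ((t * fst g) mod k, (t * snd g) mod k)"
      unfolding cyc_subgroup_def by blast
    have "x = (((t mod k) * fst g) mod k, ((t mod k) * snd g) mod k)"
      using x by (simp add: mod_mult_left_eq)
    moreover have "t mod k \<in> {0..<k}" using assms by simp
    ultimately show "x \<in> (\<lambda>t. ((t * fst g) mod k, (t * snd g) mod k)) ` {0..<k}" by blast
  qed
next
  show "(\<lambda>t. ((t * fst g) mod k, (t * snd g) mod k)) ` {0..<k} \<subseteq> cyc_subgroup k g"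
    unfolding cyc_subgroup_def by blast
qed

lemma card_cyc_iff:
  assumes "k > 0"
  shows "card (cyc_subgroup k g) = k \<longleftrightarrow> full k g"
proof -
  let ?f = "\<lambda>t. ((t * fst g) mod k, (t * snd g) mod k)"
  have "card (cyc_subgroup k g) = k \<longleftrightarrow> inj_on ?f {0..<k}"
    using inj_on_iff_eq_card[of "{0..<k}" ?f] cyc_eq[OF assms] by simp
  also have "\<dots> \<longleftrightarrow> full k g"
  proof
    assume inj: "inj_on ?f {0..<k}"
    show "full k g" unfolding full_def
    proof (intro allI impI)
      fix t assume h: "k dvd t * fst g \<and> k dvd t * snd g"
      have "?f (t mod k) = ?f 0"
        using h by (simp add: mod_mult_left_eq)
      moreover have "t mod k \<in> {0..<k}" "0 \<in> {0..<k}" using assms by auto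
      ultimately have "t mod k = 0" using inj by (meson inj_onD)
      then show "k dvd t" by auto
    qed
  next
    assume f: "full k g"
    show "inj_on ?f {0..<k}"
    proof (rule inj_onI)
      fix s t assume s: "s \<in> {0..<k}" and t: "t \<in> {0..<k}" and e: "?f s = ?f t"
      { fix s t assume s: "s \<in> {0..<k}" and t: "t \<in> {0..<k}" and e: "?f s = ?f t" and le: "s \<le> t"
        have m1: "(t * fst g) mod k = (s * fst g) mod k" "(t * snd g) mod k = (s * snd g) mod k"
          using e by auto
        have "s * fst g \<le> t * fst g" "s * snd g \<le> t * snd g" using le by (simp_all add: mult_le_mono1)
        then have "k dvd t * fst g - s * fst g" "k dvd t * snd g - s * snd g"
          using m1 by (simp_all add: mod_eq_dvd_iff_nat)
        then have "k dvd (t - s) * fst g" "k dvd (t - s) * snd g" by (simp_all add: diff_mult_distrib)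
        then have "k dvd (t - s)" using f unfolding full_def by blast
        then have kd: "k dvd (t - s)" .
        have "s = t"
        proof (rule ccontr)
          assume "s \<noteq> t"
          then have "0 < t - s" using le by simp
          then have "k \<le> t - s" using kd by (simp add: dvd_imp_le)
          then show False using t by simp
        qed
      }
      then show "s = t" using s t e by (metis nat_le_linear)
    qed
  qed
  finally show ?thesis .
qed


lemma two_points:
  assumes "m > 1" "y \<in> Zk2 m" "y' \<in> Zk2 m"
  shows "\<exists>h r. full m h \<and> h \<in> Zk2 m \<and> fst y' = (fst y + r * fst h) mod m \<and> snd y' = (snd y + r * snd h) mod m"
proof -
  obtain y1 y2 z1 z2 where yy: "y = (y1, y2)" "y' = (z1, z2)" by (cases y, cases y')
  have b: "y1 < m" "y2 < m" "z1 < m" "z2 < m" using assms yy by (auto simp: Zk2_def)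
  define a where "a = (z1 + m - y1) mod m"
  define b' where "b' = (z2 + m - y2) mod m"
  have e1: "y1 + (z1 + m - y1) = z1 + m" "y2 + (z2 + m - y2) = z2 + m" using b by simp_all
  have ea: "(y1 + a) mod m = z1" unfolding a_def using b e1 by (simp add: mod_add_right_eq)
  have eb: "(y2 + b') mod m = z2" unfolding b'_def using b e1 by (simp add: mod_add_right_eq)
  have am: "a < m" "b' < m" using assms unfolding a_def b'_def by auto
  show ?thesis
  proof (cases "a = 0 \<and> b' = 0")
    case True
    then show ?thesis using ea eb yy assms
      by (intro exI[of _ "(1,0)"] exI[of _ 0]) (auto simp: full_def Zk2_def)
  next
    case False
    define g where "g = gcd a b'"
    have g0: "g > 0" using False g_def by auto
    have ga: "a = g * (a div g)" "b' = g * (b' div g)" unfolding g_def by auto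
    have cop: "gcd (a div g) (b' div g) = 1" unfolding g_def using g0 g_def
      by (metis div_gcd_coprime False coprime_iff_gcd_eq_1)
    have full: "full m (a div g, b' div g)" unfolding full_def
    proof (intro allI impI)
      fix t assume "m dvd t * fst (a div g, b' div g) \<and> m dvd t * snd (a div g, b' div g)"
      then have "m dvd gcd (t * (a div g)) (t * (b' div g))" by simp
      also have "gcd (t * (a div g)) (t * (b' div g)) = t * gcd (a div g) (b' div g)"
        by (simp add: gcd_mult_distrib_nat)
      finally show "m dvd t" using cop by simp
    qed
    have "a div g < m" "b' div g < m" using am
      by (meson div_le_dividend le_less_trans)+
    then show ?thesis using full ea eb yy ga
      by (intro exI[of _ "(a div g, b' div g)"] exI[of _ g]) (auto simp: Zk2_def mult.commute)
  qed
qed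


lemma line_exists:
  fixes n m c q1 q2 :: nat and h :: "nat \<times> nat"
  assumes n: "n > 0" and m: "m > 0" and cop: "coprime n m" and fh: "full m h"
  shows "\<exists>L. is_line (n*m) L \<and> (\<forall>p\<in>Zk2 (n*m). snd p mod n = c \<and>
     (\<exists>r. fst p mod m = (q1 + r * fst h) mod m \<and> snd p mod m = (q2 + r * snd h) mod m) \<longrightarrow> p \<in> L)"
proof -
  let ?N = "n*m"
  have N: "?N > 0" using n m by simp
  obtain P1 where P1: "[P1 = 0] (mod n)" "[P1 = q1] (mod m)" using binary_chinese_remainder_nat[OF cop] by blast
  obtain P2 where P2: "[P2 = c] (mod n)" "[P2 = q2] (mod m)" using binary_chinese_remainder_nat[OF cop] by blast
  obtain G1 where G1: "[G1 = 1] (mod n)" "[G1 = fst h] (mod m)" using binary_chinese_remainder_nat[OF cop] by blast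
  obtain G2 where G2: "[G2 = 0] (mod n)" "[G2 = snd h] (mod m)" using binary_chinese_remainder_nat[OF cop] by blast
  define P where "P = (P1 mod ?N, P2 mod ?N)"
  define G where "G = (G1 mod ?N, G2 mod ?N)"
  define L where "L = zadd ?N P ` cyc_subgroup ?N G"
  have fG: "full ?N G" unfolding full_def
  proof (intro allI impI)
    fix t assume a: "?N dvd t * fst G \<and> ?N dvd t * snd G"
    have "[t * fst G = 0] (mod ?N)" "[t * snd G = 0] (mod ?N)" using a by (auto simp: cong_0_iff)
    then have c1: "[t * G1 = 0] (mod ?N)" "[t * G2 = 0] (mod ?N)" unfolding G_def
      by (auto simp: cong_def mod_mult_right_eq)
    then have "[t * G1 = 0] (mod n)" using cong_modulus_mult_nat by blast
    moreover have "[t * G1 = t * 1] (mod n)" using G1(1) by (rule cong_scalar_left)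
    ultimately have "[t = 0] (mod n)" by (metis cong_sym cong_trans mult_1_right)
    then have dn: "n dvd t" by (simp add: cong_0_iff)
    have "[t * G1 = 0] (mod m)" "[t * G2 = 0] (mod m)" using c1 cong_modulus_mult_nat mult.commute by metis+
    moreover have "[t * G1 = t * fst h] (mod m)" "[t * G2 = t * snd h] (mod m)"
      using G1 G2 by (simp_all add: cong_scalar_left)
    ultimately have "m dvd t * fst h" "m dvd t * snd h"
      by (metis cong_sym cong_trans cong_0_iff)+
    then have "m dvd t" using fh unfolding full_def by blast
    then show "?N dvd t" using dn cop by (simp add: divides_mult)
  qed
  have line: "is_line ?N L" unfolding is_line_def L_def
    using fG card_cyc_iff[OF N] N by (intro bexI[of _ P] bexI[of _ G]) (auto simp: P_def G_def Zk2_def)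
  have mem: "p \<in> L" if p: "p \<in> Zk2 ?N" "snd p mod n = c" and r: "fst p mod m = (q1 + r * fst h) mod m"
      "snd p mod m = (q2 + r * snd h) mod m" for p r
  proof -
    obtain a b where ab: "p = (a, b)" by (cases p)
    have abN: "a < ?N" "b < ?N" using p ab by (auto simp: Zk2_def)
    obtain t where t: "[t = a] (mod n)" "[t = r] (mod m)" using binary_chinese_remainder_nat[OF cop] by blast
    have e1: "[P1 + t * G1 = a] (mod ?N)"
    proof (rule coprime_cong_mult_nat[OF _ _ cop])
      have "[P1 + t * G1 = 0 + a * 1] (mod n)" using P1 t G1 by (intro cong_add cong_mult) auto
      then show "[P1 + t * G1 = a] (mod n)" by simp
      have "[P1 + t * G1 = q1 + r * fst h] (mod m)" using P1 t G1 by (intro cong_add cong_mult) auto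
      moreover have "[q1 + r * fst h = a] (mod m)" using r ab by (simp add: cong_def)
      ultimately show "[P1 + t * G1 = a] (mod m)" by (rule cong_trans)
    qed
    have e2: "[P2 + t * G2 = b] (mod ?N)"
    proof (rule coprime_cong_mult_nat[OF _ _ cop])
      have "[P2 + t * G2 = c + a * 0] (mod n)" using P2 t G2 by (intro cong_add cong_mult) auto
      moreover have "[c = b] (mod n)" using p ab by (auto simp: cong_def)
      ultimately show "[P2 + t * G2 = b] (mod n)" by (simp add: cong_trans)
      have "[P2 + t * G2 = q2 + r * snd h] (mod m)" using P2 t G2 by (intro cong_add cong_mult) auto
      moreover have "[q2 + r * snd h = b] (mod m)" using r ab by (simp add: cong_def)
      ultimately show "[P2 + t * G2 = b] (mod m)" by (rule cong_trans)
    qed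
    have "zadd ?N P ((t * fst G) mod ?N, (t * snd G) mod ?N) = (a, b)"
      using e1 e2 abN unfolding zadd_def P_def G_def
      by (simp add: cong_def mod_add_left_eq mod_add_right_eq mod_mult_right_eq)
    moreover have "((t * fst G) mod ?N, (t * snd G) mod ?N) \<in> cyc_subgroup ?N G"
      unfolding cyc_subgroup_def by blast
    ultimately show ?thesis unfolding L_def using ab by (metis image_eqI)
  qed
  show ?thesis using line mem by blast
qed


lemma fin_caps: "finite {A. is_cap k A}"
proof -
  have "{A. is_cap k A} \<subseteq> Pow (Zk2 k)" by (auto simp: is_cap_def)
  moreover have "finite (Zk2 k)" by (simp add: Zk2_def)
  ultimately show ?thesis by (meson finite_Pow_iff finite_subset)
qed

lemma cap_le: "is_cap k A \<Longrightarrow> card A \<le> m2 k"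
  unfolding m2_def using fin_caps by (intro Max_ge) auto

lemma m2_ge2: assumes "m > 1" shows "2 \<le> m2 m"
proof -
  have "is_cap m {(0,0),(1,0)}" using assms by (auto simp: is_cap_def Zk2_def)
  from cap_le[OF this] show ?thesis by simp
qed

lemma on_line: "y \<in> zadd m q ` cyc_subgroup m h \<Longrightarrow>
  \<exists>r. fst y = (fst q + r * fst h) mod m \<and> snd y = (snd q + r * snd h) mod m"
  unfolding zadd_def cyc_subgroup_def by (auto simp: mod_add_right_eq)

lemma piece_le:
  assumes n: "n > 0" and m: "m > 1" and cop: "coprime n m" and A: "is_cap (n*m) A"
  shows "card {p\<in>A. snd p mod n = c} \<le> m2 m"
proof -
  let ?P = "{p\<in>A. snd p mod n = c}"
  let ?f = "\<lambda>p::nat\<times>nat. (fst p mod m, snd p mod m)"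
  have m0: "m > 0" using m by simp
  have AZ: "A \<subseteq> Zk2 (n*m)" using A by (simp add: is_cap_def)
  have finA: "finite A" using AZ finite_subset by (auto simp: Zk2_def)
  have noL: "\<not> (\<exists>L. is_line (n*m) L \<and> x \<in> L \<and> y \<in> L \<and> z \<in> L)"
    if "x \<in> ?P" "y \<in> ?P" "z \<in> ?P" "x \<noteq> y" "y \<noteq> z" "x \<noteq> z" for x y z
    using A that unfolding is_cap_def by blast
  have lift: "\<exists>L. is_line (n*m) L \<and> x \<in> L \<and> y \<in> L \<and> z \<in> L"
    if "x \<in> ?P" "y \<in> ?P" "z \<in> ?P" "full m h"
      "fst (?f x) = (q1 + rx * fst h) mod m" "snd (?f x) = (q2 + rx * snd h) mod m"
      "fst (?f y) = (q1 + ry * fst h) mod m" "snd (?f y) = (q2 + ry * snd h) mod m"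
      "fst (?f z) = (q1 + rz * fst h) mod m" "snd (?f z) = (q2 + rz * snd h) mod m"
    for x y z h q1 q2 rx ry rz
  proof -
    obtain L where L: "is_line (n*m) L" and memL: "\<forall>p\<in>Zk2 (n*m). snd p mod n = c \<and>
     (\<exists>r. fst p mod m = (q1 + r * fst h) mod m \<and> snd p mod m = (q2 + r * snd h) mod m) \<longrightarrow> p \<in> L"
      using line_exists[OF n m0 cop \<open>full m h\<close>, of c q1 q2] by blast
    have "x \<in> L" using memL that AZ by (metis (mono_tags, lifting) fst_conv snd_conv mem_Collect_eq subsetD)
    moreover have "y \<in> L" using memL that AZ by (metis (mono_tags, lifting) fst_conv snd_conv mem_Collect_eq subsetD)
    moreover have "z \<in> L" using memL that AZ by (metis (mono_tags, lifting) fst_conv snd_conv mem_Collect_eq subsetD)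
    ultimately show ?thesis using L by blast
  qed
  have fZ: "?f p \<in> Zk2 m" for p using m0 by (simp add: Zk2_def)
  show ?thesis
  proof (cases "inj_on ?f ?P")
    case True
    have "is_cap m (?f ` ?P)" unfolding is_cap_def
    proof (intro conjI ballI impI)
      show "?f ` ?P \<subseteq> Zk2 m" using fZ by auto
    next
      fix x' y' z' assume x': "x' \<in> ?f ` ?P" and y': "y' \<in> ?f ` ?P" and z': "z' \<in> ?f ` ?P"
        and d: "x' \<noteq> y' \<and> y' \<noteq> z' \<and> x' \<noteq> z'"
      obtain x y z where xyz: "x \<in> ?P" "y \<in> ?P" "z \<in> ?P" "x' = ?f x" "y' = ?f y" "z' = ?f z"
        using x' y' z' by blast
      show "\<not> (\<exists>L. is_line m L \<and> x' \<in> L \<and> y' \<in> L \<and> z' \<in> L)"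
      proof
        assume "\<exists>L. is_line m L \<and> x' \<in> L \<and> y' \<in> L \<and> z' \<in> L"
        then obtain q h where h: "card (cyc_subgroup m h) = m"
          and xL: "x' \<in> zadd m q ` cyc_subgroup m h" and yL: "y' \<in> zadd m q ` cyc_subgroup m h"
          and zL: "z' \<in> zadd m q ` cyc_subgroup m h"
          unfolding is_line_def by blast
        have fh: "full m h" using h card_cyc_iff[OF m0] by simp
        obtain rx ry rz where r: "fst x' = (fst q + rx * fst h) mod m" "snd x' = (snd q + rx * snd h) mod m"
          "fst y' = (fst q + ry * fst h) mod m" "snd y' = (snd q + ry * snd h) mod m"
          "fst z' = (fst q + rz * fst h) mod m" "snd z' = (snd q + rz * snd h) mod m"
          using on_line[OF xL] on_line[OF yL] on_line[OF zL] by blast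
        have "\<exists>L. is_line (n*m) L \<and> x \<in> L \<and> y \<in> L \<and> z \<in> L"
          using lift[OF xyz(1-3) fh] r xyz by simp
        moreover have "x \<noteq> y" "y \<noteq> z" "x \<noteq> z" using d xyz by auto
        ultimately show False using noL xyz by blast
      qed
    qed
    then have "card (?f ` ?P) \<le> m2 m" by (rule cap_le)
    then show ?thesis using card_image[OF True] by simp
  next
    case False
    then obtain x y where xy: "x \<in> ?P" "y \<in> ?P" "x \<noteq> y" "?f x = ?f y"
      unfolding inj_on_def by blast
    show ?thesis
    proof (cases "\<exists>z\<in>?P. z \<noteq> x \<and> z \<noteq> y")
      case True
      then obtain z where z: "z \<in> ?P" "z \<noteq> x" "z \<noteq> y" by blast
      obtain h r where hr: "full m h" "fst (?f z) = (fst (?f x) + r * fst h) mod m"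
        "snd (?f z) = (snd (?f x) + r * snd h) mod m"
        using two_points[OF m fZ[of x] fZ[of z]] by blast
      have "\<exists>L. is_line (n*m) L \<and> x \<in> L \<and> y \<in> L \<and> z \<in> L"
        apply (rule lift[OF xy(1,2) z(1) hr(1), of "fst (?f x)" 0 "snd (?f x)" 0 r])
        using hr xy m0 by auto
      then show ?thesis using noL[OF xy(1,2) z(1)] xy z by auto
    next
      case False
      then have "?P \<subseteq> {x, y}" by blast
      then have "card ?P \<le> 2" by (metis card_2_iff card_mono finite.emptyI finite_insert xy(3))
      then show ?thesis using m2_ge2[OF m] by simp
    qed
  qed
qed

lemma half:
  assumes n: "n > 0" and m: "m > 1" and cop: "coprime n m"
  shows "m2 (n * m) \<le> n * m2 m"
proof -
  have "card A \<le> n * m2 m" if A: "is_cap (n*m) A" for A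
  proof -
    have "A = (\<Union>c\<in>{0..<n}. {p\<in>A. snd p mod n = c})" using n by auto
    then have "card A \<le> (\<Sum>c\<in>{0..<n}. card {p\<in>A. snd p mod n = c})"
      by (metis card_UN_le finite_atLeastLessThan)
    also have "\<dots> \<le> (\<Sum>c\<in>{0..<n}. m2 m)" by (intro sum_mono piece_le[OF n m cop A])
    finally show ?thesis by simp
  qed
  moreover have "is_cap (n*m) {}" by (simp add: is_cap_def)
  ultimately show ?thesis unfolding m2_def using fin_caps
    by (subst Max_le_iff) auto
qed

theorem mainTheorem8:
  fixes n m :: nat
  assumes "n > 1" and "m > 1" and "coprime n m"
  shows "m2 (n * m) \<le> min (n * m2 m) (m * m2 n)"
proof -
  have "m2 (n * m) \<le> n * m2 m" using half assms by simp
  moreover have "m2 (m * n) \<le> m * m2 n" using half[of m n] assms by (simp add: coprime_commute)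
  ultimately show ?thesis by (simp add: mult.commute)
qed

end
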